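(* Let $f\in\mathbb C[x_1,\dots,x_n]$ be nonzero, $\ell\in\mathbb N$, let $\tau$ be a face of $\Gamma(f)$ and let $\omega$ lie in the relative interior of $C_\tau$, $\omega\neq0$. For $1\le i\le n$ put $\lambda_i=\max\{\gamma_i:\gamma\in\tau\cap\mathrm{Supp}(f)\}$. Then $$\partial_i^{\ell\lambda_i+1}\in\mathrm{in}_{(-\omega,\omega)}\big(\mathrm{Ann}(f^\ell)\big)\quad(1\le i\le n),$$ and for every $v\in V_\tau$ and every $\gamma_\tau\in\tau$, $$\sum_{j=1}^n v_jx_j\partial_j-\ell\langle v,\gamma_\tau\rangle\in\mathrm{in}_{(-\omega,\omega)}\big(\mathrm{Ann}(f^\ell)\big).$$
   Context: $D_n$ is the $n$-th Weyl algebra ($\partial_ix_j=x_j\partial_i+\delta_{ij}$); ideals are left ideals. For $\omega\in\mathbb R^n$, the $(-\omega,\omega)$-weight of $x^\alpha\partial^\beta$ is $-\langle\omega,\alpha\rangle+\langle\omega,\beta\rangle$; $\mathrm{in}_{(-\omega,\omega)}(P)$ is the sum of the terms of maximal weight of the normally ordered expression of $P$, and $\mathrm{in}_{(-\omega,\omega)}(I)$ is the left ideal generated by the $\mathrm{in}_{(-\omega,\omega)}(P)$, $P\in I\setminus\{0\}$. $\mathrm{Ann}(f^\ell)=\{P\in D_n:P\bullet f^\ell=0\}$ with $x_i\bullet g=x_ig$, $\partial_i\bullet g=\partial g/\partial x_i$. For $f=\sum_\gamma c_\gamma x^\gamma$: $\mathrm{Supp}(f)=\{\gamma:c_\gamma\ne0\}$,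 $\Gamma(f)$ its convex hull, $\mathrm{ord}_f(\omega)=\min\{\langle\gamma,\omega\rangle:\gamma\in\Gamma(f)\}$; faces are $\tau_\omega=\{u\in\Gamma(f):\langle u,\omega\rangle=\mathrm{ord}_f(\omega)\}$; for a face $\tau$, $C_\tau=\{\omega:\langle u,\omega\rangle=\mathrm{ord}_f(\omega)\ \forall u\in\tau\}$ and $V_\tau=\{v\in\mathbb R^n:\langle v,\gamma\rangle=\langle v,\gamma'\rangle\ \forall\gamma,\gamma'\in\tau\cap\mathrm{Supp}(f)\}$. $\mathbb N=\{0,1,2,\dots\}$. *)

theory Defs
  imports "HOL-Analysis.Analysis" "HOL-Library.Poly_Mapping"
begin

text \<open>Variables are indexed by a finite type 'n (so n = CARD('n)).
  Exponent vectors: 'n =>0 nat.  Polynomials in C[x_1..x_n]: ('n =>0 nat) =>0 complex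
  (the library's convolution ring structure).\<close>

type_synonym 'n cpoly = "('n \<Rightarrow>\<^sub>0 nat) \<Rightarrow>\<^sub>0 complex"

text \<open>Elements of the Weyl algebra D_n in normally ordered form
  sum c_{a,b} x^a \<partial>^b, represented by their coefficient map on pairs (a,b).\<close>

type_synonym 'n weyl = "(('n \<Rightarrow>\<^sub>0 nat) \<times> ('n \<Rightarrow>\<^sub>0 nat)) \<Rightarrow>\<^sub>0 complex"

text \<open>Product of normally ordered monomials:
  x^a \<partial>^b \<cdot> x^c \<partial>^d = sum_{k \<le> b, k \<le> c} prod_i k_i! C(b_i,k_i) C(c_i,k_i) x^(a+c-k) \<partial>^(b+d-k).\<close>

definition weyl_mono_mult ::
  "complex \<Rightarrow> ('n::finite \<Rightarrow>\<^sub>0 nat) \<Rightarrow> ('n \<Rightarrow>\<^sub>0 nat) \<Rightarrow> ('n \<Rightarrow>\<^sub>0 nat) \<Rightarrow> ('n \<Rightarrow>\<^sub>0 nat) \<Rightarrow> 'n weyl" where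
  "weyl_mono_mult s a b c d =
     (\<Sum>k\<in>{k. \<forall>i. Poly_Mapping.lookup k i \<le> Poly_Mapping.lookup b i \<and> Poly_Mapping.lookup k i \<le> Poly_Mapping.lookup c i}.
        Poly_Mapping.single (a + c - k, b + d - k)
          (s * of_nat (\<Prod>i\<in>UNIV. fact (Poly_Mapping.lookup k i) * (Poly_Mapping.lookup b i choose Poly_Mapping.lookup k i)
                                * (Poly_Mapping.lookup c i choose Poly_Mapping.lookup k i))))"

definition weyl_mult :: "'n::finite weyl \<Rightarrow> 'n weyl \<Rightarrow> 'n weyl" where
  "weyl_mult P Q =
     (\<Sum>p\<in>Poly_Mapping.keys P. \<Sum>q\<in>Poly_Mapping.keys Q.
        weyl_mono_mult (Poly_Mapping.lookup P p * Poly_Mapping.lookup Q q) (fst p) (snd p) (fst q) (snd q))"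

inductive_set left_ideal_gen :: "'n::finite weyl set \<Rightarrow> 'n weyl set" for S where
  zero: "0 \<in> left_ideal_gen S"
| step: "J \<in> left_ideal_gen S \<Longrightarrow> P \<in> S \<Longrightarrow> J + weyl_mult Q P \<in> left_ideal_gen S"

text \<open>Action x_i \<bullet> g = x_i g, \<partial>_i \<bullet> g = dg/dx_i:
  x^a \<partial>^b \<bullet> x^c = prod_i (c_i choose b_i) b_i! x^(a+c-b) if b \<le> c, else 0.\<close>
definition weyl_act :: "'n::finite weyl \<Rightarrow> 'n cpoly \<Rightarrow> 'n cpoly" where
  "weyl_act P g =
     (\<Sum>p\<in>Poly_Mapping.keys P. \<Sum>c\<in>Poly_Mapping.keys g.
        (if \<forall>i. Poly_Mapping.lookup (snd p) i \<le> Poly_Mapping.lookup c i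
         then Poly_Mapping.single (fst p + c - snd p)
                (Poly_Mapping.lookup P p * Poly_Mapping.lookup g c *
                 of_nat (\<Prod>i\<in>UNIV. (Poly_Mapping.lookup c i choose Poly_Mapping.lookup (snd p) i) * fact (Poly_Mapping.lookup (snd p) i)))
         else 0))"

definition Ann :: "'n::finite cpoly \<Rightarrow> 'n weyl set" where
  "Ann g = {P. weyl_act P g = 0}"

definition weight :: "real^'n \<Rightarrow> ('n::finite \<Rightarrow>\<^sub>0 nat) \<times> ('n \<Rightarrow>\<^sub>0 nat) \<Rightarrow> real" where
  "weight \<omega> p = - (\<Sum>i\<in>UNIV. \<omega> $ i * real (Poly_Mapping.lookup (fst p) i)) + (\<Sum>i\<in>UNIV. \<omega> $ i * real (Poly_Mapping.lookup (snd p) i))"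

definition initial :: "real^'n \<Rightarrow> 'n::finite weyl \<Rightarrow> 'n weyl" where
  "initial \<omega> P =
     (let m = Max (weight \<omega> ` Poly_Mapping.keys P)
      in \<Sum>p\<in>{p\<in>Poly_Mapping.keys P. weight \<omega> p = m}. Poly_Mapping.single p (Poly_Mapping.lookup P p))"

definition initial_ideal :: "real^'n \<Rightarrow> 'n::finite weyl set \<Rightarrow> 'n weyl set" where
  "initial_ideal \<omega> I = left_ideal_gen {initial \<omega> P | P. P \<in> I \<and> P \<noteq> 0}"

definition expvec :: "('n::finite \<Rightarrow>\<^sub>0 nat) \<Rightarrow> real^'n" where
  "expvec \<alpha> = (\<chi> i. real (Poly_Mapping.lookup \<alpha> i))"

definition Supp :: "'n::finite cpoly \<Rightarrow> (real^'n) set" where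
  "Supp f = expvec ` Poly_Mapping.keys f"

definition Newton :: "'n::finite cpoly \<Rightarrow> (real^'n) set" where
  "Newton f = convex hull (Supp f)"

definition ord_f :: "'n::finite cpoly \<Rightarrow> real^'n \<Rightarrow> real" where
  "ord_f f \<omega> = Inf {u \<bullet> \<omega> | u. u \<in> Newton f}"

definition face_at :: "'n::finite cpoly \<Rightarrow> real^'n \<Rightarrow> (real^'n) set" where
  "face_at f \<omega> = {u \<in> Newton f. u \<bullet> \<omega> = ord_f f \<omega>}"

definition is_face :: "'n::finite cpoly \<Rightarrow> (real^'n) set \<Rightarrow> bool" where
  "is_face f \<tau> \<longleftrightarrow> (\<exists>\<omega>. \<tau> = face_at f \<omega>)"

definition cone_of :: "'n::finite cpoly \<Rightarrow> (real^'n) set \<Rightarrow> (real^'n) set" where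
  "cone_of f \<tau> = {\<omega>. \<forall>u\<in>\<tau>. u \<bullet> \<omega> = ord_f f \<omega>}"

definition V_of :: "'n::finite cpoly \<Rightarrow> (real^'n) set \<Rightarrow> (real^'n) set" where
  "V_of f \<tau> = {v. \<forall>\<gamma>\<in>\<tau> \<inter> Supp f. \<forall>\<gamma>'\<in>\<tau> \<inter> Supp f. v \<bullet> \<gamma> = v \<bullet> \<gamma>'}"

definition lam :: "'n::finite cpoly \<Rightarrow> (real^'n) set \<Rightarrow> 'n \<Rightarrow> nat" where
  "lam f \<tau> i = Max {Poly_Mapping.lookup \<alpha> i | \<alpha>. \<alpha> \<in> Poly_Mapping.keys f \<and> expvec \<alpha> \<in> \<tau>}"

definition dpow :: "'n::finite \<Rightarrow> nat \<Rightarrow> 'n weyl" where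
  "dpow i m = Poly_Mapping.single (0, Poly_Mapping.single i m) 1"

definition euler_op :: "real^'n::finite \<Rightarrow> complex \<Rightarrow> 'n weyl" where
  "euler_op v c =
     (\<Sum>j\<in>UNIV. Poly_Mapping.single (Poly_Mapping.single j 1, Poly_Mapping.single j 1) (complex_of_real (v $ j)))
     - Poly_Mapping.single (0, 0) c"

end

theory Submission
  imports Defs
begin

lemma sum_single_keys:
  fixes h :: "'a \<Rightarrow>\<^sub>0 'b::comm_monoid_add"
  shows "(\<Sum>k\<in>Poly_Mapping.keys h. Poly_Mapping.single k (Poly_Mapping.lookup h k)) = h"
proof (rule poly_mapping_eqI)
  fix x
  show "Poly_Mapping.lookup (\<Sum>k\<in>Poly_Mapping.keys h. Poly_Mapping.single k (Poly_Mapping.lookup h k)) x = Poly_Mapping.lookup h x"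
    by (cases "x \<in> Poly_Mapping.keys h")
       (auto simp: lookup_sum lookup_single when_def in_keys_iff)
qed

lemma sum_single_same:
  "(\<Sum>x\<in>A. Poly_Mapping.single k (F x)) = Poly_Mapping.single k (\<Sum>x\<in>A. F x :: 'b::comm_monoid_add)"
  by (induction A rule: infinite_finite_induct) (auto simp: single_add)

definition act1 :: "('n \<Rightarrow>\<^sub>0 nat) \<times> ('n \<Rightarrow>\<^sub>0 nat) \<Rightarrow> complex \<Rightarrow> ('n::finite \<Rightarrow>\<^sub>0 nat) \<Rightarrow> complex \<Rightarrow> 'n cpoly" where
  "act1 p x c y = (if \<forall>i. Poly_Mapping.lookup (snd p) i \<le> Poly_Mapping.lookup c i
         then Poly_Mapping.single (fst p + c - snd p)
                (x * y *
                 of_nat (\<Prod>i\<in>UNIV. (Poly_Mapping.lookup c i choose Poly_Mapping.lookup (snd p) i) * fact (Poly_Mapping.lookup (snd p) i)))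
         else 0)"

lemma weyl_act_eq:
  "weyl_act P g = (\<Sum>p\<in>Poly_Mapping.keys P. \<Sum>c\<in>Poly_Mapping.keys g. act1 p (Poly_Mapping.lookup P p) c (Poly_Mapping.lookup g c))"
  unfolding weyl_act_def act1_def by simp

lemma act1_zero1 [simp]: "act1 p 0 c y = 0" by (simp add: act1_def)
lemma act1_zero2 [simp]: "act1 p x c 0 = 0" by (simp add: act1_def)
lemma act1_add: "act1 p (x + x') c y = act1 p x c y + act1 p x' c y"
  by (simp add: act1_def distrib_right single_add)
lemma act1_uminus: "act1 p (- x) c y = - act1 p x c y"
  by (simp add: act1_def single_uminus)

lemma weyl_act_expand:
  assumes "finite A" "Poly_Mapping.keys P \<subseteq> A" "finite C" "Poly_Mapping.keys g \<subseteq> C"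
  shows "weyl_act P g = (\<Sum>p\<in>A. \<Sum>c\<in>C. act1 p (Poly_Mapping.lookup P p) c (Poly_Mapping.lookup g c))"
proof -
  have "weyl_act P g = (\<Sum>p\<in>Poly_Mapping.keys P. \<Sum>c\<in>C. act1 p (Poly_Mapping.lookup P p) c (Poly_Mapping.lookup g c))"
    unfolding weyl_act_eq
    by (intro sum.cong refl sum.mono_neutral_left) (auto simp: assms in_keys_iff)
  also have "\<dots> = (\<Sum>p\<in>A. \<Sum>c\<in>C. act1 p (Poly_Mapping.lookup P p) c (Poly_Mapping.lookup g c))"
    by (intro sum.mono_neutral_left) (auto simp: assms in_keys_iff)
  finally show ?thesis .
qed

lemma weyl_act_add: "weyl_act (P + Q) g = weyl_act P g + weyl_act Q g"
proof -
  let ?A = "Poly_Mapping.keys P \<union> Poly_Mapping.keys Q"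
  have 1: "weyl_act (P + Q) g = (\<Sum>p\<in>?A. \<Sum>c\<in>Poly_Mapping.keys g. act1 p (Poly_Mapping.lookup (P+Q) p) c (Poly_Mapping.lookup g c))"
    by (rule weyl_act_expand) (use keys_add[of P Q] in auto)
  have 2: "weyl_act P g = (\<Sum>p\<in>?A. \<Sum>c\<in>Poly_Mapping.keys g. act1 p (Poly_Mapping.lookup P p) c (Poly_Mapping.lookup g c))"
    by (rule weyl_act_expand) auto
  have 3: "weyl_act Q g = (\<Sum>p\<in>?A. \<Sum>c\<in>Poly_Mapping.keys g. act1 p (Poly_Mapping.lookup Q p) c (Poly_Mapping.lookup g c))"
    by (rule weyl_act_expand) auto
  show ?thesis unfolding 1 2 3
    by (simp add: lookup_add act1_add sum.distrib)
qed

lemma weyl_act_zero [simp]: "weyl_act 0 g = 0"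
  by (simp add: weyl_act_eq)

lemma weyl_act_uminus: "weyl_act (- P) g = - weyl_act P g"
  by (simp add: weyl_act_eq act1_uminus sum_negf)

lemma weyl_act_diff: "weyl_act (P - Q) g = weyl_act P g - weyl_act Q g"
  by (metis diff_conv_add_uminus weyl_act_add weyl_act_uminus)

lemma weyl_act_sum: "weyl_act (sum F I) g = (\<Sum>i\<in>I. weyl_act (F i) g)"
  by (induction I rule: infinite_finite_induct) (auto simp: weyl_act_add)

lemma weyl_act_single:
  "weyl_act (Poly_Mapping.single p x) g = (\<Sum>c\<in>Poly_Mapping.keys g. act1 p x c (Poly_Mapping.lookup g c))"
  by (subst weyl_act_expand[of "{p}"]) auto

lemma weyl_mono_mult_one: "weyl_mono_mult s 0 0 c d = Poly_Mapping.single (c, d) s"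
proof -
  have "{k::'a\<Rightarrow>\<^sub>0nat. \<forall>i. Poly_Mapping.lookup k i \<le> Poly_Mapping.lookup 0 i \<and> Poly_Mapping.lookup k i \<le> Poly_Mapping.lookup c i} = {0}"
    by (auto intro!: poly_mapping_eqI)
  then show ?thesis by (simp add: weyl_mono_mult_def)
qed

lemma weyl_mult_one: "weyl_mult (Poly_Mapping.single (0,0) 1) Q = Q"
  unfolding weyl_mult_def by (simp add: weyl_mono_mult_one sum_single_keys)

lemma initial_mem:
  assumes "P \<in> I" "P \<noteq> 0" "initial \<omega> P = B"
  shows "B \<in> initial_ideal \<omega> I"
proof -
  have "0 + weyl_mult (Poly_Mapping.single (0,0) 1) B \<in> initial_ideal \<omega> I"
    unfolding initial_ideal_def
    by (rule left_ideal_gen.step[OF left_ideal_gen.zero]) (use assms in auto)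
  then show ?thesis by (simp add: weyl_mult_one)
qed

lemma coord_sum:
  assumes "c \<le> N"
  shows "(\<Sum>k\<le>N. (if a + k \<le> c then (-1)^k / of_nat (fact k) * of_nat ((c choose (a+k)) * fact (a+k)) else 0) :: complex)
       = (if c = a then of_nat (fact a) else 0)"
proof (cases "a \<le> c")
  case False
  then show ?thesis by (auto intro!: sum.neutral)
next
  case True
  define m where "m = c - a"
  have mN: "m \<le> N" using assms by (simp add: m_def)
  have "(\<Sum>k\<le>N. (if a + k \<le> c then (-1)^k / of_nat (fact k) * of_nat ((c choose (a+k)) * fact (a+k)) else 0) :: complex)
      = (\<Sum>k\<le>m. (if a + k \<le> c then (-1)^k / of_nat (fact k) * of_nat ((c choose (a+k)) * fact (a+k)) else 0))"
    using mN by (intro sum.mono_neutral_right) (auto simp: m_def)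
  also have "\<dots> = (\<Sum>k\<le>m. ((-1)^k * of_nat (m choose k)) * (of_nat (fact c) / of_nat (fact m)) :: complex)"
  proof (intro sum.cong refl)
    fix k assume k: "k \<in> {..m}"
    then have ak: "a + k \<le> c" using True by (simp add: m_def)
    have ck: "c - (a + k) = m - k" by (simp add: m_def)
    have e1: "(of_nat (c choose (a+k)) :: complex) = of_nat (fact c) / (of_nat (fact (a+k)) * of_nat (fact (m - k)))"
      using binomial_fact[OF ak, where 'a=complex] ck by simp
    have e2: "(of_nat (m choose k) :: complex) = of_nat (fact m) / (of_nat (fact k) * of_nat (fact (m - k)))"
      using binomial_fact[of k m, where 'a=complex] k by simp
    show "(if a + k \<le> c then (-1)^k / of_nat (fact k) * of_nat ((c choose (a+k)) * fact (a+k)) else 0)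
        = ((-1)^k * of_nat (m choose k)) * (of_nat (fact c) / of_nat (fact m) :: complex)"
      using ak by (simp add: e1 e2 field_simps)
  qed
  also have "\<dots> = (\<Sum>k\<le>m. (-1)^k * of_nat (m choose k) :: complex) * (of_nat (fact c) / of_nat (fact m))"
    by (simp only: sum_distrib_right)
  also have "\<dots> = (if c = a then of_nat (fact a) else 0)"
  proof (cases "m = 0")
    case True
    then have "c = a" using \<open>a \<le> c\<close> by (simp add: m_def)
    then show ?thesis using True by simp
  next
    case False
    then have "c \<noteq> a" by (auto simp: m_def)
    then show ?thesis using choose_alternating_sum[of m, where 'a=complex] False by simp
  qed
  finally show ?thesis .
qed

definition box :: "nat \<Rightarrow> ('n::finite \<Rightarrow>\<^sub>0 nat) set" where
  "box N = {\<beta>. \<forall>i. Poly_Mapping.lookup \<beta> i \<le> N}"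

lemma box_bij: "bij_betw Poly_Mapping.lookup (box N :: ('n::finite \<Rightarrow>\<^sub>0 nat) set) (PiE UNIV (\<lambda>_. {..N}))"
proof (rule bij_betw_imageI)
  show "inj_on Poly_Mapping.lookup (box N :: ('n \<Rightarrow>\<^sub>0 nat) set)" by (auto intro: inj_onI)
  show "Poly_Mapping.lookup ` (box N :: ('n \<Rightarrow>\<^sub>0 nat) set) = PiE UNIV (\<lambda>_. {..N})"
  proof
    show "Poly_Mapping.lookup ` (box N :: ('n \<Rightarrow>\<^sub>0 nat) set) \<subseteq> PiE UNIV (\<lambda>_. {..N})"
      by (auto simp: box_def PiE_iff)
  next
    show "PiE UNIV (\<lambda>_. {..N}) \<subseteq> Poly_Mapping.lookup ` (box N :: ('n \<Rightarrow>\<^sub>0 nat) set)"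
    proof
      fix h :: "'n \<Rightarrow> nat" assume h: "h \<in> PiE UNIV (\<lambda>_. {..N})"
      have l: "Poly_Mapping.lookup (Abs_poly_mapping h) = h" by simp
      have "Abs_poly_mapping h \<in> (box N :: ('n \<Rightarrow>\<^sub>0 nat) set)" using h by (auto simp: box_def l PiE_iff)
      then show "h \<in> Poly_Mapping.lookup ` (box N :: ('n \<Rightarrow>\<^sub>0 nat) set)" using l by (metis image_eqI)
    qed
  qed
qed

lemma finite_box: "finite (box N)"
  using bij_betw_finite[OF box_bij] by (simp add: finite_PiE)

lemma box_sum_prod:
  fixes F :: "'n::finite \<Rightarrow> nat \<Rightarrow> 'c::comm_semiring_1"
  shows "(\<Sum>\<beta>\<in>box N. \<Prod>i\<in>UNIV. F i (Poly_Mapping.lookup \<beta> i)) = (\<Prod>i\<in>UNIV. \<Sum>k\<le>N. F i k)"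
proof -
  have "(\<Prod>i\<in>UNIV. \<Sum>k\<in>{..N}. F i k) = (\<Sum>h\<in>PiE UNIV (\<lambda>_. {..N}). \<Prod>i\<in>UNIV. F i (h i))"
    by (rule prod_sum_PiE) auto
  also have "\<dots> = (\<Sum>\<beta>\<in>box N. \<Prod>i\<in>UNIV. F i (Poly_Mapping.lookup \<beta> i))"
    by (rule sum.reindex_bij_betw[OF box_bij, symmetric])
  finally show ?thesis by simp
qed

definition rcoef :: "'n cpoly \<Rightarrow> ('n::finite \<Rightarrow>\<^sub>0 nat) \<Rightarrow> ('n \<Rightarrow>\<^sub>0 nat) \<Rightarrow> complex" where
  "rcoef g \<alpha> \<beta> = (-1)^(\<Sum>i\<in>UNIV. Poly_Mapping.lookup \<beta> i) /
     (of_nat (\<Prod>i\<in>UNIV. fact (Poly_Mapping.lookup \<beta> i)) * Poly_Mapping.lookup g \<alpha> * of_nat (\<Prod>i\<in>UNIV. fact (Poly_Mapping.lookup \<alpha> i)))"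

definition Rop :: "'n cpoly \<Rightarrow> ('n::finite \<Rightarrow>\<^sub>0 nat) \<Rightarrow> nat \<Rightarrow> ('n \<Rightarrow>\<^sub>0 nat) \<Rightarrow> complex \<Rightarrow> 'n weyl" where
  "Rop g \<alpha> N d s = (\<Sum>\<beta>\<in>box N. Poly_Mapping.single (d + \<beta>, \<alpha> + \<beta>) (s * rcoef g \<alpha> \<beta>))"

lemma inner_identity:
  fixes g :: "'n::finite cpoly"
  assumes cN: "\<forall>i. Poly_Mapping.lookup c i \<le> N" and ga: "Poly_Mapping.lookup g \<alpha> \<noteq> 0"
  shows "(\<Sum>\<beta>\<in>box N. (if \<forall>i. Poly_Mapping.lookup (\<alpha>+\<beta>) i \<le> Poly_Mapping.lookup c i
           then rcoef g \<alpha> \<beta> * of_nat (\<Prod>i\<in>UNIV. (Poly_Mapping.lookup c i choose Poly_Mapping.lookup (\<alpha>+\<beta>) i) * fact (Poly_Mapping.lookup (\<alpha>+\<beta>) i))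
           else 0)) = (if c = \<alpha> then 1 / Poly_Mapping.lookup g \<alpha> else 0)"
proof -
  define K where "K = Poly_Mapping.lookup g \<alpha> * of_nat (\<Prod>i\<in>UNIV. fact (Poly_Mapping.lookup \<alpha> i))"
  have K0: "K \<noteq> 0" using ga by (simp add: K_def)
  define F where "F = (\<lambda>i k. (if Poly_Mapping.lookup \<alpha> i + k \<le> Poly_Mapping.lookup c i
      then (-1)^k / of_nat (fact k) * of_nat ((Poly_Mapping.lookup c i choose (Poly_Mapping.lookup \<alpha> i + k)) * fact (Poly_Mapping.lookup \<alpha> i + k)) else 0) :: complex)"
  have trm: "(if \<forall>i. Poly_Mapping.lookup (\<alpha>+\<beta>) i \<le> Poly_Mapping.lookup c i
           then rcoef g \<alpha> \<beta> * of_nat (\<Prod>i\<in>UNIV. (Poly_Mapping.lookup c i choose Poly_Mapping.lookup (\<alpha>+\<beta>) i) * fact (Poly_Mapping.lookup (\<alpha>+\<beta>) i))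
           else 0) = (\<Prod>i\<in>UNIV. F i (Poly_Mapping.lookup \<beta> i)) / K" for \<beta>
  proof (cases "\<forall>i. Poly_Mapping.lookup (\<alpha>+\<beta>) i \<le> Poly_Mapping.lookup c i")
    case True
    have "(\<Prod>i\<in>UNIV. F i (Poly_Mapping.lookup \<beta> i)) = (\<Prod>i\<in>UNIV. (-1)^(Poly_Mapping.lookup \<beta> i) / of_nat (fact (Poly_Mapping.lookup \<beta> i)) * of_nat ((Poly_Mapping.lookup c i choose Poly_Mapping.lookup (\<alpha>+\<beta>) i) * fact (Poly_Mapping.lookup (\<alpha>+\<beta>) i)))"
      using True by (intro prod.cong refl) (auto simp: F_def lookup_add)
    also have "\<dots> = (-1)^(\<Sum>i\<in>UNIV. Poly_Mapping.lookup \<beta> i) / of_nat (\<Prod>i\<in>UNIV. fact (Poly_Mapping.lookup \<beta> i)) * of_nat (\<Prod>i\<in>UNIV. (Poly_Mapping.lookup c i choose Poly_Mapping.lookup (\<alpha>+\<beta>) i) * fact (Poly_Mapping.lookup (\<alpha>+\<beta>) i))"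
      by (simp add: power_sum of_nat_prod prod.distrib prod_dividef)
    finally show ?thesis using True K0 by (simp add: rcoef_def K_def field_simps)
  next
    case False
    then obtain i where i: "\<not> Poly_Mapping.lookup (\<alpha>+\<beta>) i \<le> Poly_Mapping.lookup c i" by auto
    have "F i (Poly_Mapping.lookup \<beta> i) = 0" using i by (simp add: F_def lookup_add)
    then have "(\<Prod>i\<in>UNIV. F i (Poly_Mapping.lookup \<beta> i)) = 0"
      by (intro prod_zero) auto
    then show ?thesis unfolding if_not_P[OF False] by simp
  qed
  have "(\<Sum>\<beta>\<in>box N. (\<Prod>i\<in>UNIV. F i (Poly_Mapping.lookup \<beta> i)) / K) = (\<Sum>\<beta>\<in>box N. (\<Prod>i\<in>UNIV. F i (Poly_Mapping.lookup \<beta> i))) / K"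
    by (simp add: sum_divide_distrib)
  also have "\<dots> = (\<Prod>i\<in>UNIV. \<Sum>k\<le>N. F i k) / K"
    by (simp add: box_sum_prod)
  also have "\<dots> = (\<Prod>i\<in>UNIV. (if Poly_Mapping.lookup c i = Poly_Mapping.lookup \<alpha> i then of_nat (fact (Poly_Mapping.lookup \<alpha> i)) else 0)) / K"
    unfolding F_def using cN by (simp add: coord_sum)
  also have "\<dots> = (if c = \<alpha> then 1 / Poly_Mapping.lookup g \<alpha> else 0)"
  proof (cases "c = \<alpha>")
    case True
    then show ?thesis using K0 by (simp add: K_def of_nat_prod)
  next
    case False
    then obtain i where "Poly_Mapping.lookup c i \<noteq> Poly_Mapping.lookup \<alpha> i"
      by (meson poly_mapping_eqI)
    then have "(\<Prod>i\<in>UNIV. (if Poly_Mapping.lookup c i = Poly_Mapping.lookup \<alpha> i then of_nat (fact (Poly_Mapping.lookup \<alpha> i)) else 0::complex)) = 0"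
      by (intro prod_zero) auto
    then show ?thesis using False by simp
  qed
  finally show ?thesis by (simp add: trm)
qed

lemma act1_shift:
  "act1 (d + \<beta>, \<alpha> + \<beta>) x c y = Poly_Mapping.single (d + (c - \<alpha>))
     (if \<forall>i. Poly_Mapping.lookup (\<alpha>+\<beta>) i \<le> Poly_Mapping.lookup c i
      then x * y * of_nat (\<Prod>i\<in>UNIV. (Poly_Mapping.lookup c i choose Poly_Mapping.lookup (\<alpha>+\<beta>) i) * fact (Poly_Mapping.lookup (\<alpha>+\<beta>) i))
      else 0)"
proof (cases "\<forall>i. Poly_Mapping.lookup (\<alpha>+\<beta>) i \<le> Poly_Mapping.lookup c i")
  case True
  have "d + \<beta> + c - (\<alpha> + \<beta>) = d + (c - \<alpha>)"
  proof (rule poly_mapping_eqI)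
    fix k show "Poly_Mapping.lookup (d + \<beta> + c - (\<alpha> + \<beta>)) k = Poly_Mapping.lookup (d + (c - \<alpha>)) k"
      using True[rule_format, of k] by (simp add: lookup_add lookup_minus)
  qed
  then show ?thesis unfolding act1_def fst_conv snd_conv if_P[OF True] by simp
next
  case False
  then show ?thesis unfolding act1_def fst_conv snd_conv if_not_P[OF False] by simp
qed

lemma act_R:
  fixes g :: "'n::finite cpoly"
  assumes a: "\<alpha> \<in> Poly_Mapping.keys g" and N: "\<forall>c\<in>Poly_Mapping.keys g. \<forall>i. Poly_Mapping.lookup c i \<le> N"
  shows "weyl_act (Rop g \<alpha> N d s) g = Poly_Mapping.single d s"
proof -
  have ga: "Poly_Mapping.lookup g \<alpha> \<noteq> 0" using a by (simp add: in_keys_iff)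
  have "weyl_act (Rop g \<alpha> N d s) g = (\<Sum>\<beta>\<in>box N. \<Sum>c\<in>Poly_Mapping.keys g. act1 (d + \<beta>, \<alpha> + \<beta>) (s * rcoef g \<alpha> \<beta>) c (Poly_Mapping.lookup g c))"
    by (simp add: Rop_def weyl_act_sum weyl_act_single)
  also have "\<dots> = (\<Sum>c\<in>Poly_Mapping.keys g. \<Sum>\<beta>\<in>box N. act1 (d + \<beta>, \<alpha> + \<beta>) (s * rcoef g \<alpha> \<beta>) c (Poly_Mapping.lookup g c))"
    by (rule sum.swap)
  also have "\<dots> = (\<Sum>c\<in>Poly_Mapping.keys g. if c = \<alpha> then Poly_Mapping.single d s else 0)"
  proof (intro sum.cong refl)
    fix c assume c: "c \<in> Poly_Mapping.keys g"
    have "(\<Sum>\<beta>\<in>box N. act1 (d + \<beta>, \<alpha> + \<beta>) (s * rcoef g \<alpha> \<beta>) c (Poly_Mapping.lookup g c))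
      = Poly_Mapping.single (d + (c - \<alpha>)) (s * Poly_Mapping.lookup g c * (\<Sum>\<beta>\<in>box N. (if \<forall>i. Poly_Mapping.lookup (\<alpha>+\<beta>) i \<le> Poly_Mapping.lookup c i
           then rcoef g \<alpha> \<beta> * of_nat (\<Prod>i\<in>UNIV. (Poly_Mapping.lookup c i choose Poly_Mapping.lookup (\<alpha>+\<beta>) i) * fact (Poly_Mapping.lookup (\<alpha>+\<beta>) i))
           else 0)))"
      unfolding act1_shift sum_single_same sum_distrib_left
      by (intro arg_cong[where f="Poly_Mapping.single _"] sum.cong refl) auto
    also have "\<dots> = Poly_Mapping.single (d + (c - \<alpha>)) (s * Poly_Mapping.lookup g c * (if c = \<alpha> then 1 / Poly_Mapping.lookup g \<alpha> else 0))"
      using N c ga by (simp add: inner_identity)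
    also have "\<dots> = (if c = \<alpha> then Poly_Mapping.single d s else 0)"
      using ga by auto
    finally show "(\<Sum>\<beta>\<in>box N. act1 (d + \<beta>, \<alpha> + \<beta>) (s * rcoef g \<alpha> \<beta>) c (Poly_Mapping.lookup g c)) = (if c = \<alpha> then Poly_Mapping.single d s else 0)" .
  qed
  also have "\<dots> = Poly_Mapping.single d s" using a by simp
  finally show ?thesis .
qed

definition wdot :: "real^'n \<Rightarrow> ('n::finite \<Rightarrow>\<^sub>0 nat) \<Rightarrow> real" where
  "wdot \<omega> c = (\<Sum>i\<in>UNIV. \<omega> $ i * real (Poly_Mapping.lookup c i))"

lemma wdot_add: "wdot \<omega> (a + b) = wdot \<omega> a + wdot \<omega> b"
  by (simp add: wdot_def lookup_add sum.distrib distrib_left)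

lemma wdot_zero [simp]: "wdot \<omega> 0 = 0"
  by (simp add: wdot_def)

lemma weight_eq: "weight \<omega> p = wdot \<omega> (snd p) - wdot \<omega> (fst p)"
  by (simp add: weight_def wdot_def)

lemma G:
  fixes g :: "'n::finite cpoly" and B :: "'n weyl"
  assumes a: "\<alpha> \<in> Poly_Mapping.keys g" and B0: "B \<noteq> 0"
    and wB: "\<forall>p\<in>Poly_Mapping.keys B. weight \<omega> p = e"
    and hk: "\<forall>c\<in>Poly_Mapping.keys (weyl_act B g). wdot \<omega> c > wdot \<omega> \<alpha> - e"
  shows "B \<in> initial_ideal \<omega> (Ann g)"
proof -
  define N where "N = (\<Sum>c\<in>Poly_Mapping.keys g. \<Sum>i\<in>UNIV. Poly_Mapping.lookup c i)"
  have Nb: "\<forall>c\<in>Poly_Mapping.keys g. \<forall>i. Poly_Mapping.lookup c i \<le> N"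
  proof (intro ballI allI)
    fix c i assume c: "c \<in> Poly_Mapping.keys g"
    have "Poly_Mapping.lookup c i \<le> (\<Sum>i\<in>UNIV. Poly_Mapping.lookup c i)"
      by (rule member_le_sum) auto
    also have "\<dots> \<le> N" unfolding N_def
      by (rule member_le_sum[where f="\<lambda>c. \<Sum>i\<in>UNIV. Poly_Mapping.lookup c i"]) (use c in auto)
    finally show "Poly_Mapping.lookup c i \<le> N" .
  qed
  define h where "h = weyl_act B g"
  define S where "S = (\<Sum>c\<in>Poly_Mapping.keys h. Rop g \<alpha> N c (- Poly_Mapping.lookup h c))"
  define P where "P = B + S"
  have actS: "weyl_act S g = - h"
  proof -
    have "weyl_act S g = (\<Sum>c\<in>Poly_Mapping.keys h. Poly_Mapping.single c (- Poly_Mapping.lookup h c))"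
      unfolding S_def weyl_act_sum using act_R[OF a Nb] by simp
    also have "\<dots> = - h"
      by (simp add: single_uminus sum_negf sum_single_keys)
    finally show ?thesis .
  qed
  have actP: "weyl_act P g = 0"
    unfolding P_def weyl_act_add actS h_def by simp
  have keysS: "Poly_Mapping.keys S \<subseteq> {(c + \<beta>, \<alpha> + \<beta>) | c \<beta>. c \<in> Poly_Mapping.keys h}"
  proof -
    have "Poly_Mapping.keys S \<subseteq> (\<Union>c\<in>Poly_Mapping.keys h. Poly_Mapping.keys (Rop g \<alpha> N c (- Poly_Mapping.lookup h c)))"
      unfolding S_def by (rule keys_sum)
    also have "\<dots> \<subseteq> {(c + \<beta>, \<alpha> + \<beta>) | c \<beta>. c \<in> Poly_Mapping.keys h}"
    proof (rule UN_least)
      fix c assume c: "c \<in> Poly_Mapping.keys h"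
      have "Poly_Mapping.keys (Rop g \<alpha> N c (- Poly_Mapping.lookup h c)) \<subseteq>
          (\<Union>\<beta>\<in>box N. Poly_Mapping.keys (Poly_Mapping.single (c + \<beta>, \<alpha> + \<beta>) (- Poly_Mapping.lookup h c * rcoef g \<alpha> \<beta>)))"
        unfolding Rop_def by (rule keys_sum)
      also have "\<dots> \<subseteq> {(c + \<beta>, \<alpha> + \<beta>) | c \<beta>. c \<in> Poly_Mapping.keys h}"
        using c by auto
      finally show "Poly_Mapping.keys (Rop g \<alpha> N c (- Poly_Mapping.lookup h c)) \<subseteq> {(c + \<beta>, \<alpha> + \<beta>) | c \<beta>. c \<in> Poly_Mapping.keys h}" .
    qed
    finally show ?thesis .
  qed
  have wS: "\<forall>p\<in>Poly_Mapping.keys S. weight \<omega> p < e"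
  proof
    fix p assume "p \<in> Poly_Mapping.keys S"
    then obtain c \<beta> where p: "p = (c + \<beta>, \<alpha> + \<beta>)" and c: "c \<in> Poly_Mapping.keys h"
      using keysS by blast
    have "weight \<omega> p = wdot \<omega> \<alpha> - wdot \<omega> c"
      by (simp add: p weight_eq wdot_add)
    also have "\<dots> < e" using hk c unfolding h_def by force
    finally show "weight \<omega> p < e" .
  qed
  have lP: "Poly_Mapping.lookup P p = Poly_Mapping.lookup B p" if "weight \<omega> p = e" for p
  proof -
    have "p \<notin> Poly_Mapping.keys S" using wS that by force
    then have "Poly_Mapping.lookup S p = 0" by (simp add: in_keys_iff)
    then show ?thesis by (simp add: P_def lookup_add)
  qed
  have keysP: "Poly_Mapping.keys P \<subseteq> Poly_Mapping.keys B \<union> Poly_Mapping.keys S"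
    unfolding P_def by (rule keys_add)
  have kB: "Poly_Mapping.keys B \<subseteq> Poly_Mapping.keys P"
  proof
    fix p assume p: "p \<in> Poly_Mapping.keys B"
    then have "Poly_Mapping.lookup P p = Poly_Mapping.lookup B p" using wB lP by blast
    then show "p \<in> Poly_Mapping.keys P" using p by (simp add: in_keys_iff)
  qed
  have kBne: "Poly_Mapping.keys B \<noteq> {}" using B0 by simp
  have P0: "P \<noteq> 0" using kB kBne by auto
  have Mx: "Max (weight \<omega> ` Poly_Mapping.keys P) = e"
  proof (rule Max_eqI)
    show "finite (weight \<omega> ` Poly_Mapping.keys P)" by simp
    show "y \<le> e" if "y \<in> weight \<omega> ` Poly_Mapping.keys P" for y
      using that keysP wB wS by fastforce
    show "e \<in> weight \<omega> ` Poly_Mapping.keys P"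
      using kB kBne wB by (metis all_not_in_conv image_eqI subsetD)
  qed
  have seteq: "{p \<in> Poly_Mapping.keys P. weight \<omega> p = e} = Poly_Mapping.keys B"
    using kB keysP wB wS by fastforce
  have "initial \<omega> P = (\<Sum>p\<in>Poly_Mapping.keys B. Poly_Mapping.single p (Poly_Mapping.lookup P p))"
    unfolding initial_def Let_def Mx seteq ..
  also have "\<dots> = (\<Sum>p\<in>Poly_Mapping.keys B. Poly_Mapping.single p (Poly_Mapping.lookup B p))"
    using wB lP by (intro sum.cong refl) auto
  also have "\<dots> = B" by (rule sum_single_keys)
  finally have iP: "initial \<omega> P = B" .
  have "P \<in> Ann g" using actP by (simp add: Ann_def)
  then show ?thesis using initial_mem[OF _ P0 iP] by blast
qed

lemma inner_expvec: "expvec c \<bullet> \<omega> = wdot \<omega> c"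
  by (simp add: inner_vec_def expvec_def wdot_def mult.commute)

lemma expvec_add: "expvec (a + b) = expvec a + expvec b"
  by (simp add: expvec_def vec_eq_iff lookup_add)

lemma expvec_zero [simp]: "expvec 0 = 0"
  by (simp add: expvec_def vec_eq_iff)

lemma Supp_finite: "finite (Supp f)"
  by (simp add: Supp_def)

lemma Supp_Newton: "Supp f \<subseteq> Newton f"
  unfolding Newton_def by (rule hull_subset)

lemma ord_facts:
  fixes f :: "'n::finite cpoly"
  assumes f0: "f \<noteq> 0"
  shows "(\<forall>u\<in>Newton f. ord_f f \<omega> \<le> u \<bullet> \<omega>) \<and> (\<exists>c\<in>Poly_Mapping.keys f. expvec c \<bullet> \<omega> = ord_f f \<omega>)"
proof -
  let ?S = "Supp f"
  have fin: "finite ?S" by (rule Supp_finite)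
  have ne: "?S \<noteq> {}" using f0 by (simp add: Supp_def)
  define m where "m = Min ((\<lambda>s. s \<bullet> \<omega>) ` ?S)"
  have m_in: "m \<in> (\<lambda>s. s \<bullet> \<omega>) ` ?S" unfolding m_def using fin ne by (intro Min_in) auto
  have m_le: "m \<le> s \<bullet> \<omega>" if "s \<in> ?S" for s unfolding m_def using fin that by (intro Min_le) auto
  have NS: "Newton f \<subseteq> {x. inner \<omega> x \<ge> m}"
    unfolding Newton_def
  proof (rule hull_minimal)
    show "?S \<subseteq> {x. inner \<omega> x \<ge> m}" using m_le by (auto simp: inner_commute)
    show "convex {x. inner \<omega> x \<ge> m}" by (rule convex_halfspace_ge)
  qed
  obtain s0 where s0: "s0 \<in> ?S" "s0 \<bullet> \<omega> = m" using m_in by auto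
  have "ord_f f \<omega> = m"
    unfolding ord_f_def
  proof (rule cInf_eq_minimum)
    show "m \<in> {u \<bullet> \<omega> |u. u \<in> Newton f}" using s0 Supp_Newton by force
    show "m \<le> x" if "x \<in> {u \<bullet> \<omega> |u. u \<in> Newton f}" for x
      using that NS by (auto simp: inner_commute)
  qed
  moreover have "\<forall>u\<in>Newton f. m \<le> u \<bullet> \<omega>" using NS by (auto simp: inner_commute)
  moreover have "\<exists>c\<in>Poly_Mapping.keys f. expvec c \<bullet> \<omega> = m" using s0 by (auto simp: Supp_def)
  ultimately show ?thesis by simp
qed

lemma face_nonempty:
  fixes f :: "'n::finite cpoly"
  assumes f0: "f \<noteq> 0" and tau: "\<tau> = face_at f \<omega>'"
  shows "\<exists>c\<in>Poly_Mapping.keys f. expvec c \<in> \<tau>"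
proof -
  obtain c where c: "c \<in> Poly_Mapping.keys f" "expvec c \<bullet> \<omega>' = ord_f f \<omega>'"
    using ord_facts[OF f0] by blast
  have "expvec c \<in> Newton f" using c Supp_Newton by (auto simp: Supp_def)
  then show ?thesis using c by (auto simp: tau face_at_def)
qed

lemma outside_face:
  fixes f :: "'n::finite cpoly"
  assumes f0: "f \<noteq> 0" and tau: "\<tau> = face_at f \<omega>'"
    and om: "\<omega> \<in> rel_interior (cone_of f \<tau>)"
    and s: "s \<in> Newton f" and sn: "s \<notin> \<tau>"
  shows "s \<bullet> \<omega> > ord_f f \<omega>"
proof -
  let ?C = "cone_of f \<tau>"
  obtain c0 where c0: "c0 \<in> Poly_Mapping.keys f" "expvec c0 \<in> \<tau>"
    using face_nonempty[OF f0 tau] by blast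
  define u0 where "u0 = expvec c0"
  have u0: "u0 \<in> \<tau>" using c0 by (simp add: u0_def)
  from om obtain e where omC: "\<omega> \<in> ?C" and e: "e > 0" and eb: "ball \<omega> e \<inter> affine hull ?C \<subseteq> ?C"
    unfolding mem_rel_interior_ball by blast
  have om'C: "\<omega>' \<in> ?C" by (auto simp: cone_of_def tau face_at_def)
  define t where "t = e / (2 * (norm (\<omega> - \<omega>') + 1))"
  have d0: "2 * (norm (\<omega> - \<omega>') + 1) > 0" by (intro mult_pos_pos) (auto intro: add_nonneg_pos)
  have t0: "t > 0" unfolding t_def using e d0 by (rule divide_pos_pos)
  define \<omega>'' where "\<omega>'' = \<omega> + t *\<^sub>R (\<omega> - \<omega>')"
  have "dist \<omega> \<omega>'' = t * norm (\<omega> - \<omega>')"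
    using t0 by (simp add: \<omega>''_def dist_norm)
  also have "\<dots> < e"
  proof -
    have n0: "0 \<le> norm (\<omega> - \<omega>')" by simp
    have q: "norm (\<omega> - \<omega>') / (2 * (norm (\<omega> - \<omega>') + 1)) < 1"
      by (subst pos_divide_less_eq[OF d0]) (simp add: algebra_simps add_pos_nonneg)
    have "t * norm (\<omega> - \<omega>') = e * (norm (\<omega> - \<omega>') / (2 * (norm (\<omega> - \<omega>') + 1)))"
      by (simp add: t_def)
    also have "\<dots> < e * 1"
      using e q by (intro mult_strict_left_mono) auto
    finally show ?thesis by simp
  qed
  finally have "\<omega>'' \<in> ball \<omega> e" by simp
  moreover have "\<omega>'' \<in> affine hull ?C"
  proof -
    have "(1 + t) *\<^sub>R \<omega> + (- t) *\<^sub>R \<omega>' \<in> affine hull ?C"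
      by (rule mem_affine[OF affine_affine_hull]) (use omC om'C hull_inc in auto)
    moreover have "(1 + t) *\<^sub>R \<omega> + (- t) *\<^sub>R \<omega>' = \<omega>''"
      by (simp add: \<omega>''_def algebra_simps)
    ultimately show ?thesis by simp
  qed
  ultimately have om''C: "\<omega>'' \<in> ?C" using eb by blast
  have A: "ord_f f \<omega>'' \<le> s \<bullet> \<omega>''" using ord_facts[OF f0] s by blast
  have A2: "u0 \<bullet> \<omega>'' = ord_f f \<omega>''" using om''C u0 by (simp add: cone_of_def)
  have B: "ord_f f \<omega>' \<le> s \<bullet> \<omega>'" using ord_facts[OF f0] s by blast
  have B1: "s \<bullet> \<omega>' \<noteq> ord_f f \<omega>'" using sn s by (auto simp: tau face_at_def)
  have B2: "u0 \<bullet> \<omega>' = ord_f f \<omega>'" using u0 by (simp add: tau face_at_def)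
  have C: "u0 \<bullet> \<omega> = ord_f f \<omega>" using omC u0 by (simp add: cone_of_def)
  have e1: "s \<bullet> \<omega>'' = s \<bullet> \<omega> + t * (s \<bullet> \<omega> - s \<bullet> \<omega>')"
    by (simp add: \<omega>''_def inner_add_right inner_diff_right)
  have e2: "u0 \<bullet> \<omega>'' = u0 \<bullet> \<omega> + t * (u0 \<bullet> \<omega> - u0 \<bullet> \<omega>')"
    by (simp add: \<omega>''_def inner_add_right inner_diff_right)
  have YW: "s \<bullet> \<omega>' - u0 \<bullet> \<omega>' > 0" using B B1 B2 by linarith
  then have tYW: "t * (s \<bullet> \<omega>' - u0 \<bullet> \<omega>') > 0" using t0 by simp
  have "(1 + t) * (s \<bullet> \<omega> - u0 \<bullet> \<omega>) \<ge> t * (s \<bullet> \<omega>' - u0 \<bullet> \<omega>')"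
    using A A2 e1 e2 by (simp add: algebra_simps)
  then have "(1 + t) * (s \<bullet> \<omega> - u0 \<bullet> \<omega>) > 0" using tYW by linarith
  then have "s \<bullet> \<omega> - u0 \<bullet> \<omega> > 0" using t0
    by (metis add_pos_pos zero_less_mult_pos zero_less_one)
  then show ?thesis using C by linarith
qed

lemma V_face:
  fixes f :: "'n::finite cpoly"
  assumes f0: "f \<noteq> 0" and tau: "\<tau> = face_at f \<omega>'"
    and v: "v \<in> V_of f \<tau>" and g: "\<gamma> \<in> \<tau>" and s: "s \<in> \<tau> \<inter> Supp f"
  shows "v \<bullet> s = v \<bullet> \<gamma>"
proof -
  let ?S = "Supp f"
  let ?o = "ord_f f \<omega>'"
  have fin: "finite ?S" by (rule Supp_finite)
  have gN: "\<gamma> \<in> convex hull ?S" using g by (simp add: tau face_at_def Newton_def)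
  then obtain \<mu> where mu0: "\<forall>x\<in>?S. 0 \<le> \<mu> x" and mu1: "sum \<mu> ?S = 1" and mug: "(\<Sum>x\<in>?S. \<mu> x *\<^sub>R x) = \<gamma>"
    unfolding convex_hull_finite[OF fin] by blast
  have go: "\<gamma> \<bullet> \<omega>' = ?o" using g by (simp add: tau face_at_def)
  have xo: "?o \<le> x \<bullet> \<omega>'" if "x \<in> ?S" for x
    using ord_facts[OF f0] that Supp_Newton by blast
  have "(\<Sum>x\<in>?S. \<mu> x * (x \<bullet> \<omega>' - ?o)) = (\<Sum>x\<in>?S. \<mu> x * (x \<bullet> \<omega>') - ?o * \<mu> x)"
    by (intro sum.cong refl) (simp add: algebra_simps)
  also have "\<dots> = (\<Sum>x\<in>?S. \<mu> x * (x \<bullet> \<omega>')) - ?o * sum \<mu> ?S"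
    by (simp only: sum_subtractf sum_distrib_left)
  also have "(\<Sum>x\<in>?S. \<mu> x * (x \<bullet> \<omega>')) = \<gamma> \<bullet> \<omega>'"
    by (simp add: mug[symmetric] inner_sum_left)
  finally have sz: "(\<Sum>x\<in>?S. \<mu> x * (x \<bullet> \<omega>' - ?o)) = 0" using go mu1 by simp
  have nn: "\<And>x. x \<in> ?S \<Longrightarrow> 0 \<le> \<mu> x * (x \<bullet> \<omega>' - ?o)"
  proof -
    fix x assume x: "x \<in> ?S"
    have "0 \<le> \<mu> x" using mu0 x by blast
    moreover have "0 \<le> x \<bullet> \<omega>' - ?o" using xo[OF x] by simp
    ultimately show "0 \<le> \<mu> x * (x \<bullet> \<omega>' - ?o)" by (rule mult_nonneg_nonneg)
  qed
  have z: "\<mu> x * (x \<bullet> \<omega>' - ?o) = 0" if x: "x \<in> ?S" for x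
    using sum_nonneg_0[where f="\<lambda>x. \<mu> x * (x \<bullet> \<omega>' - ?o)" and s="?S", OF fin nn sz x] by simp
  have "v \<bullet> \<gamma> = v \<bullet> (\<Sum>x\<in>?S. \<mu> x *\<^sub>R x)" by (simp only: mug)
  also have "\<dots> = (\<Sum>x\<in>?S. \<mu> x * (v \<bullet> x))"
    by (simp add: inner_sum_right)
  also have "\<dots> = (\<Sum>x\<in>?S. \<mu> x * (v \<bullet> s))"
  proof (intro sum.cong refl)
    fix x assume x: "x \<in> ?S"
    show "\<mu> x * (v \<bullet> x) = \<mu> x * (v \<bullet> s)"
    proof (cases "\<mu> x = 0")
      case False
      have "\<mu> x * (x \<bullet> \<omega>' - ?o) = 0" using z[OF x] .
      then have xo': "x \<bullet> \<omega>' = ?o" using False by simp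
      have "x \<in> Newton f" using x Supp_Newton by blast
      then have "x \<in> \<tau>" using xo' unfolding tau face_at_def by blast
      then have xts: "x \<in> \<tau> \<inter> Supp f" using x by blast
      have "v \<bullet> x = v \<bullet> s" using v xts s unfolding V_of_def by blast
      then show ?thesis by simp
    qed simp
  qed
  also have "\<dots> = sum \<mu> ?S * (v \<bullet> s)" by (simp only: sum_distrib_right)
  also have "\<dots> = v \<bullet> s" using mu1 by simp
  finally show ?thesis by simp
qed

lemma lookup_mult_fin:
  fixes p q :: "('n \<Rightarrow>\<^sub>0 nat) \<Rightarrow>\<^sub>0 complex"
  shows "Poly_Mapping.lookup (p * q) x = (\<Sum>a\<in>Poly_Mapping.keys p. \<Sum>b\<in>Poly_Mapping.keys q.
           if x = a + b then Poly_Mapping.lookup p a * Poly_Mapping.lookup q b else 0)"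
proof -
  have inner: "Sum_any (\<lambda>b. Poly_Mapping.lookup q b when x = a + b) = (\<Sum>b\<in>Poly_Mapping.keys q. if x = a + b then Poly_Mapping.lookup q b else 0)" for a
    by (subst Sum_any.expand_superset[of "Poly_Mapping.keys q"]) (auto simp: when_def in_keys_iff)
  have "Poly_Mapping.lookup (p * q) x = Sum_any (\<lambda>a. Poly_Mapping.lookup p a * (\<Sum>b\<in>Poly_Mapping.keys q. if x = a + b then Poly_Mapping.lookup q b else 0))"
    by (simp add: lookup_mult inner)
  also have "\<dots> = (\<Sum>a\<in>Poly_Mapping.keys p. Poly_Mapping.lookup p a * (\<Sum>b\<in>Poly_Mapping.keys q. if x = a + b then Poly_Mapping.lookup q b else 0))"
    by (subst Sum_any.expand_superset[of "Poly_Mapping.keys p"]) (auto simp: in_keys_iff)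
  also have "\<dots> = (\<Sum>a\<in>Poly_Mapping.keys p. \<Sum>b\<in>Poly_Mapping.keys q.
           if x = a + b then Poly_Mapping.lookup p a * Poly_Mapping.lookup q b else 0)"
    unfolding sum_distrib_left by (intro sum.cong refl) simp
  finally show ?thesis .
qed

lemma keys_pow_bound:
  fixes f :: "'n::finite cpoly" and \<phi> :: "('n \<Rightarrow>\<^sub>0 nat) \<Rightarrow> 'b::ordered_comm_monoid_add"
  assumes lo: "\<forall>c\<in>Poly_Mapping.keys f. lev \<le> wdot \<omega> c"
    and M: "\<forall>c\<in>Poly_Mapping.keys f. wdot \<omega> c = lev \<longrightarrow> \<phi> c \<le> M"
    and add: "\<And>a b. \<phi> (a + b) = \<phi> a + \<phi> b" and z: "\<phi> 0 = 0"
  shows "\<beta> \<in> Poly_Mapping.keys (f ^ k) \<Longrightarrow> real k * lev \<le> wdot \<omega> \<beta> \<and> (wdot \<omega> \<beta> = real k * lev \<longrightarrow> \<phi> \<beta> \<le> (\<Sum>j<k. M))"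
proof (induction k arbitrary: \<beta>)
  case 0
  then have "\<beta> = 0" by simp
  then show ?case using z by simp
next
  case (Suc k)
  have "\<beta> \<in> Poly_Mapping.keys (f * f ^ k)" using Suc.prems by simp
  then obtain a b where ab: "\<beta> = a + b" "a \<in> Poly_Mapping.keys f" "b \<in> Poly_Mapping.keys (f ^ k)"
    using keys_mult by blast
  have IH: "real k * lev \<le> wdot \<omega> b \<and> (wdot \<omega> b = real k * lev \<longrightarrow> \<phi> b \<le> (\<Sum>j<k. M))"
    using Suc.IH ab(3) by blast
  have la: "lev \<le> wdot \<omega> a" using lo ab(2) by blast
  have wb: "wdot \<omega> \<beta> = wdot \<omega> a + wdot \<omega> b" using ab(1) by (simp add: wdot_add)
  have ge: "real (Suc k) * lev \<le> wdot \<omega> \<beta>" using IH la wb by (simp add: algebra_simps)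
  moreover have "\<phi> \<beta> \<le> (\<Sum>j<Suc k. M)" if eq: "wdot \<omega> \<beta> = real (Suc k) * lev"
  proof -
    have "wdot \<omega> a = lev" "wdot \<omega> b = real k * lev" using eq IH la wb by (simp_all add: algebra_simps)
    then have "\<phi> a \<le> M" "\<phi> b \<le> (\<Sum>j<k. M)" using M ab(2) IH by auto
    then have "\<phi> a + \<phi> b \<le> M + (\<Sum>j<k. M)" by (rule add_mono)
    then show ?thesis using ab(1) add by (simp add: add.commute)
  qed
  ultimately show ?case by blast
qed

definition emb :: "('n::finite \<Rightarrow>\<^sub>0 nat) \<Rightarrow> (nat \<Rightarrow>\<^sub>0 nat)" where
  "emb c = Abs_poly_mapping (\<lambda>k. if k \<in> range (to_nat :: 'n \<Rightarrow> nat) then Poly_Mapping.lookup c (inv to_nat k) else 0)"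

lemma lookup_emb: "Poly_Mapping.lookup (emb (c :: 'n::finite \<Rightarrow>\<^sub>0 nat)) = (\<lambda>k. if k \<in> range (to_nat :: 'n \<Rightarrow> nat) then Poly_Mapping.lookup c (inv to_nat k) else 0)"
proof -
  have "{k. (if k \<in> range (to_nat :: 'n \<Rightarrow> nat) then Poly_Mapping.lookup c (inv to_nat k) else 0) \<noteq> 0} \<subseteq> range (to_nat :: 'n \<Rightarrow> nat)"
    by auto
  moreover have "finite (range (to_nat :: 'n \<Rightarrow> nat))" by simp
  ultimately show ?thesis unfolding emb_def by (intro lookup_Abs_poly_mapping) (rule finite_subset)
qed

lemma emb_add: "emb (a + b) = emb a + emb b"
  by (rule poly_mapping_eqI) (simp add: lookup_emb lookup_add)

lemma emb_zero: "emb 0 = 0"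
  by (rule poly_mapping_eqI) (simp add: lookup_emb)

lemma emb_inj: "emb a = emb b \<Longrightarrow> a = (b :: 'n::finite \<Rightarrow>\<^sub>0 nat)"
proof (rule poly_mapping_eqI)
  fix i :: 'n
  assume e: "emb a = emb b"
  have "Poly_Mapping.lookup (emb a) (to_nat i) = Poly_Mapping.lookup (emb b) (to_nat i)" using e by simp
  then show "Poly_Mapping.lookup a i = Poly_Mapping.lookup b i"
    by (simp add: lookup_emb)
qed

lemma emb_sum: "emb (\<Sum>j<(k::nat). a) = (\<Sum>j<k. emb a)"
  by (induction k) (simp_all add: emb_zero emb_add del: sum_constant)

lemma wdot_sum: "wdot \<omega> (\<Sum>j<(k::nat). a) = real k * wdot \<omega> a"
  by (induction k) (simp_all add: wdot_add algebra_simps)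

lemma exists_low:
  fixes f :: "'n::finite cpoly"
  assumes lo: "\<forall>c\<in>Poly_Mapping.keys f. lev \<le> wdot \<omega> c"
    and ex: "\<exists>c\<in>Poly_Mapping.keys f. wdot \<omega> c = lev"
  shows "\<exists>\<alpha>\<in>Poly_Mapping.keys (f ^ k). wdot \<omega> \<alpha> = real k * lev"
proof -
  define T0 where "T0 = {c\<in>Poly_Mapping.keys f. wdot \<omega> c = lev}"
  have finT: "finite (emb ` T0)" by (simp add: T0_def)
  have neT: "emb ` T0 \<noteq> {}" using ex by (auto simp: T0_def)
  obtain \<alpha>0 where a0: "\<alpha>0 \<in> T0" "emb \<alpha>0 = Max (emb ` T0)"
    using Max_in[OF finT neT] by auto
  have a0k: "\<alpha>0 \<in> Poly_Mapping.keys f" "wdot \<omega> \<alpha>0 = lev" using a0 by (auto simp: T0_def)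
  have M: "\<forall>c\<in>Poly_Mapping.keys f. wdot \<omega> c = lev \<longrightarrow> emb c \<le> emb \<alpha>0"
    using a0(2) finT by (auto simp: T0_def)
  note PB = keys_pow_bound[OF lo M emb_add emb_zero]
  have coef: "Poly_Mapping.lookup (f ^ k) (\<Sum>j<k. \<alpha>0) = (Poly_Mapping.lookup f \<alpha>0) ^ k" for k
  proof (induction k)
    case 0
    then show ?case by (simp add: lookup_one)
  next
    case (Suc k)
    define x where "x = (\<Sum>j<Suc k. \<alpha>0)"
    define ka where "ka = (\<Sum>j<k. \<alpha>0)"
    have x: "x = \<alpha>0 + ka" by (simp add: x_def ka_def add.commute)
    have fa: "Poly_Mapping.lookup f \<alpha>0 \<noteq> 0" using a0k by (simp add: in_keys_iff)
    have kak: "ka \<in> Poly_Mapping.keys (f ^ k)" using Suc.IH fa by (simp add: in_keys_iff ka_def)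
    have uniq: "a = \<alpha>0 \<and> b = ka" if ab: "a \<in> Poly_Mapping.keys f" "b \<in> Poly_Mapping.keys (f ^ k)" "x = a + b" for a b
    proof -
      have wx: "wdot \<omega> a + wdot \<omega> b = lev + real k * lev"
        using ab(3) x by (metis wdot_add wdot_sum a0k(2) ka_def)
      have la: "lev \<le> wdot \<omega> a" using lo ab(1) by blast
      have lb: "real k * lev \<le> wdot \<omega> b" using PB[OF ab(2)] by blast
      have wa: "wdot \<omega> a = lev" and wb: "wdot \<omega> b = real k * lev" using wx la lb by linarith+
      have ea: "emb a \<le> emb \<alpha>0" using M ab(1) wa by blast
      have eb: "emb b \<le> emb ka" using PB[OF ab(2)] wb by (simp add: ka_def emb_sum del: sum_constant)
      have es: "emb a + emb b = emb \<alpha>0 + emb ka" using ab(3) x by (metis emb_add)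
      have "emb a = emb \<alpha>0"
      proof (rule ccontr)
        assume "emb a \<noteq> emb \<alpha>0"
        then have "emb a < emb \<alpha>0" using ea by simp
        then have "emb a + emb b < emb \<alpha>0 + emb ka" using eb by (rule add_less_le_mono)
        then show False using es by simp
      qed
      moreover then have "emb b = emb ka" using es by simp
      ultimately show ?thesis using emb_inj by blast
    qed
    have "Poly_Mapping.lookup (f ^ Suc k) x = (\<Sum>a\<in>Poly_Mapping.keys f. \<Sum>b\<in>Poly_Mapping.keys (f ^ k).
           if x = a + b then Poly_Mapping.lookup f a * Poly_Mapping.lookup (f ^ k) b else 0)"
      by (simp add: lookup_mult_fin)
    also have "\<dots> = (\<Sum>a\<in>Poly_Mapping.keys f. if a = \<alpha>0 then Poly_Mapping.lookup f \<alpha>0 * Poly_Mapping.lookup (f ^ k) ka else 0)"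
    proof (intro sum.cong refl)
      fix a assume a: "a \<in> Poly_Mapping.keys f"
      show "(\<Sum>b\<in>Poly_Mapping.keys (f ^ k). if x = a + b then Poly_Mapping.lookup f a * Poly_Mapping.lookup (f ^ k) b else 0)
          = (if a = \<alpha>0 then Poly_Mapping.lookup f \<alpha>0 * Poly_Mapping.lookup (f ^ k) ka else 0)"
      proof (cases "a = \<alpha>0")
        case True
        have "(\<Sum>b\<in>Poly_Mapping.keys (f ^ k). if x = a + b then Poly_Mapping.lookup f a * Poly_Mapping.lookup (f ^ k) b else 0)
          = (\<Sum>b\<in>Poly_Mapping.keys (f ^ k). if b = ka then Poly_Mapping.lookup f a * Poly_Mapping.lookup (f ^ k) b else 0)"
          by (intro sum.cong refl) (use uniq a x True in auto)
        also have "\<dots> = Poly_Mapping.lookup f a * Poly_Mapping.lookup (f ^ k) ka"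
          using kak by (simp add: sum.delta)
        finally show ?thesis using True by simp
      next
        case False
        have "(\<Sum>b\<in>Poly_Mapping.keys (f ^ k). if x = a + b then Poly_Mapping.lookup f a * Poly_Mapping.lookup (f ^ k) b else 0) = 0"
          using uniq a False by (intro sum.neutral) auto
        then show ?thesis using False by simp
      qed
    qed
    also have "\<dots> = Poly_Mapping.lookup f \<alpha>0 * Poly_Mapping.lookup (f ^ k) ka"
      using a0k(1) by (simp add: sum.delta)
    also have "\<dots> = (Poly_Mapping.lookup f \<alpha>0) ^ Suc k" using Suc.IH by (simp add: ka_def)
    finally show ?case by (simp add: x_def)
  qed
  have "(Poly_Mapping.lookup f \<alpha>0) ^ k \<noteq> 0" using a0k by (simp add: in_keys_iff)
  then have "(\<Sum>j<k. \<alpha>0) \<in> Poly_Mapping.keys (f ^ k)" using coef by (simp add: in_keys_iff)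
  moreover have "wdot \<omega> (\<Sum>j<k. \<alpha>0) = real k * lev" by (simp add: wdot_sum a0k)
  ultimately show ?thesis by blast
qed

lemma act1_euler:
  "act1 (Poly_Mapping.single j 1, Poly_Mapping.single j 1) x c y = Poly_Mapping.single c (x * y * of_nat (Poly_Mapping.lookup c j))"
proof (cases "1 \<le> Poly_Mapping.lookup c j")
  case True
  have cond: "\<forall>i. Poly_Mapping.lookup (Poly_Mapping.single j (1::nat)) i \<le> Poly_Mapping.lookup c i"
    using True by (auto simp: lookup_single when_def)
  have k: "Poly_Mapping.single j 1 + c - Poly_Mapping.single j 1 = c"
    by (rule poly_mapping_eqI) (simp add: lookup_add lookup_minus)
  have p: "(\<Prod>i\<in>UNIV. (Poly_Mapping.lookup c i choose Poly_Mapping.lookup (Poly_Mapping.single j 1) i) * fact (Poly_Mapping.lookup (Poly_Mapping.single j (1::nat)) i))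
      = (\<Prod>i\<in>UNIV. if i = j then Poly_Mapping.lookup c j else 1)"
    by (intro prod.cong refl) (auto simp: lookup_single when_def)
  show ?thesis unfolding act1_def fst_conv snd_conv if_P[OF cond] k p by simp
next
  case False
  then have nc: "\<not> (\<forall>i. Poly_Mapping.lookup (Poly_Mapping.single j (1::nat)) i \<le> Poly_Mapping.lookup c i)"
    by (metis lookup_single_eq)
  have "Poly_Mapping.lookup c j = 0" using False by simp
  then show ?thesis unfolding act1_def fst_conv snd_conv if_not_P[OF nc] by simp
qed

lemma act1_const: "act1 (0, 0) x c y = Poly_Mapping.single c (x * y)"
  by (simp add: act1_def)

lemma weyl_act_euler:
  "weyl_act (euler_op v K0) g = (\<Sum>c\<in>Poly_Mapping.keys g. Poly_Mapping.single c
      (Poly_Mapping.lookup g c * ((\<Sum>j\<in>UNIV. complex_of_real (v $ j) * of_nat (Poly_Mapping.lookup c j)) - K0)))"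
proof -
  have "weyl_act (euler_op v K0) g =
      (\<Sum>j\<in>UNIV. \<Sum>c\<in>Poly_Mapping.keys g. Poly_Mapping.single c (complex_of_real (v $ j) * Poly_Mapping.lookup g c * of_nat (Poly_Mapping.lookup c j)))
      - (\<Sum>c\<in>Poly_Mapping.keys g. Poly_Mapping.single c (K0 * Poly_Mapping.lookup g c))"
    unfolding euler_op_def weyl_act_diff weyl_act_sum weyl_act_single act1_euler act1_const ..
  also have "(\<Sum>j\<in>UNIV. \<Sum>c\<in>Poly_Mapping.keys g. Poly_Mapping.single c (complex_of_real (v $ j) * Poly_Mapping.lookup g c * of_nat (Poly_Mapping.lookup c j)))
     = (\<Sum>c\<in>Poly_Mapping.keys g. Poly_Mapping.single c (\<Sum>j\<in>UNIV. complex_of_real (v $ j) * Poly_Mapping.lookup g c * of_nat (Poly_Mapping.lookup c j)))"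
    by (subst sum.swap) (simp add: sum_single_same)
  also have "\<dots> - (\<Sum>c\<in>Poly_Mapping.keys g. Poly_Mapping.single c (K0 * Poly_Mapping.lookup g c))
     = (\<Sum>c\<in>Poly_Mapping.keys g. Poly_Mapping.single c (\<Sum>j\<in>UNIV. complex_of_real (v $ j) * Poly_Mapping.lookup g c * of_nat (Poly_Mapping.lookup c j))
          - Poly_Mapping.single c (K0 * Poly_Mapping.lookup g c))"
    by (simp add: sum_subtractf)
  also have "\<dots> = (\<Sum>c\<in>Poly_Mapping.keys g. Poly_Mapping.single c
      (Poly_Mapping.lookup g c * ((\<Sum>j\<in>UNIV. complex_of_real (v $ j) * of_nat (Poly_Mapping.lookup c j)) - K0)))"
  proof (intro sum.cong refl)
    fix c
    have "(\<Sum>j\<in>UNIV. complex_of_real (v $ j) * Poly_Mapping.lookup g c * of_nat (Poly_Mapping.lookup c j)) - K0 * Poly_Mapping.lookup g c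
        = Poly_Mapping.lookup g c * ((\<Sum>j\<in>UNIV. complex_of_real (v $ j) * of_nat (Poly_Mapping.lookup c j)) - K0)"
      by (simp add: sum_distrib_left algebra_simps)
    then show "Poly_Mapping.single c (\<Sum>j\<in>UNIV. complex_of_real (v $ j) * Poly_Mapping.lookup g c * of_nat (Poly_Mapping.lookup c j))
          - Poly_Mapping.single c (K0 * Poly_Mapping.lookup g c) = Poly_Mapping.single c
      (Poly_Mapping.lookup g c * ((\<Sum>j\<in>UNIV. complex_of_real (v $ j) * of_nat (Poly_Mapping.lookup c j)) - K0))"
      by (simp add: single_diff[symmetric])
  qed
  finally show ?thesis .
qed

lemma wdot_diff:
  assumes "\<forall>j. Poly_Mapping.lookup b j \<le> Poly_Mapping.lookup a j"
  shows "wdot \<omega> (a - b) = wdot \<omega> a - wdot \<omega> b"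
proof -
  have "a = (a - b) + b"
    by (rule poly_mapping_eqI) (use assms in \<open>simp add: lookup_add lookup_minus\<close>)
  then have "wdot \<omega> a = wdot \<omega> (a - b) + wdot \<omega> b" by (metis wdot_add)
  then show ?thesis by simp
qed

lemma wdot_single: "wdot \<omega> (Poly_Mapping.single i m) = \<omega> $ i * real m"
proof -
  have "wdot \<omega> (Poly_Mapping.single i m) = (\<Sum>j\<in>UNIV. if j = i then \<omega> $ i * real m else 0)"
    unfolding wdot_def by (intro sum.cong refl) (auto simp: lookup_single when_def)
  then show ?thesis by simp
qed

lemma inner_expvec_complex:
  "(\<Sum>j\<in>UNIV. complex_of_real (v $ j) * of_nat (Poly_Mapping.lookup c j)) = complex_of_real (v \<bullet> expvec c)"
  by (simp add: inner_vec_def expvec_def of_real_sum)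

theorem mainTheorem5:
  fixes f :: "'n::finite cpoly" and l :: nat and \<tau> :: "(real^'n) set" and \<omega> :: "real^'n"
  assumes "f \<noteq> 0"
    and "is_face f \<tau>"
    and "\<omega> \<in> rel_interior (cone_of f \<tau>)"
    and "\<omega> \<noteq> 0"
  shows "(\<forall>i. dpow i (l * lam f \<tau> i + 1) \<in> initial_ideal \<omega> (Ann (f ^ l)))
    \<and> (\<forall>v\<in>V_of f \<tau>. \<forall>\<gamma>\<in>\<tau>.
         euler_op v (complex_of_real (real l * (v \<bullet> \<gamma>))) \<in> initial_ideal \<omega> (Ann (f ^ l)))"
proof -
  note f0 = assms(1) and om = assms(3)
  obtain \<omega>' where tau: "\<tau> = face_at f \<omega>'" using assms(2) by (auto simp: is_face_def)
  define lev where "lev = ord_f f \<omega>"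
  have lo: "\<forall>c\<in>Poly_Mapping.keys f. lev \<le> wdot \<omega> c"
  proof
    fix c assume c: "c \<in> Poly_Mapping.keys f"
    have "expvec c \<in> Newton f" using c Supp_Newton by (auto simp: Supp_def)
    then have "ord_f f \<omega> \<le> expvec c \<bullet> \<omega>" using ord_facts[OF f0, of \<omega>] by blast
    then show "lev \<le> wdot \<omega> c" by (simp add: lev_def inner_expvec)
  qed
  have omC: "\<omega> \<in> cone_of f \<tau>" using om rel_interior_subset by blast
  have inT: "wdot \<omega> c = lev" if "c \<in> Poly_Mapping.keys f" "expvec c \<in> \<tau>" for c
    using omC that unfolding cone_of_def lev_def by (metis (mono_tags, lifting) inner_expvec mem_Collect_eq)
  have toT: "expvec c \<in> \<tau>" if c: "c \<in> Poly_Mapping.keys f" and w: "wdot \<omega> c = lev" for c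
  proof (rule ccontr)
    assume "expvec c \<notin> \<tau>"
    moreover have "expvec c \<in> Newton f" using c Supp_Newton by (auto simp: Supp_def)
    ultimately have "expvec c \<bullet> \<omega> > ord_f f \<omega>" using outside_face[OF f0 tau om] by blast
    then show False using w by (simp add: lev_def inner_expvec)
  qed
  have ex: "\<exists>c\<in>Poly_Mapping.keys f. wdot \<omega> c = lev"
    using face_nonempty[OF f0 tau] inT by blast
  define g where "g = f ^ l"
  obtain \<alpha> where a: "\<alpha> \<in> Poly_Mapping.keys g" and wa: "wdot \<omega> \<alpha> = real l * lev"
    using exists_low[OF lo ex, of l] by (auto simp: g_def)
  have part1: "dpow i (l * lam f \<tau> i + 1) \<in> initial_ideal \<omega> (Ann g)" for i
  proof -
    define m where "m = l * lam f \<tau> i + 1"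
    define B where "B = (Poly_Mapping.single (0, Poly_Mapping.single i m) 1 :: 'n weyl)"
    have finL: "finite {Poly_Mapping.lookup \<alpha> i | \<alpha>. \<alpha> \<in> Poly_Mapping.keys f \<and> expvec \<alpha> \<in> \<tau>}"
    proof -
      have "{Poly_Mapping.lookup \<alpha> i | \<alpha>. \<alpha> \<in> Poly_Mapping.keys f \<and> expvec \<alpha> \<in> \<tau>} \<subseteq> (\<lambda>\<alpha>. Poly_Mapping.lookup \<alpha> i) ` Poly_Mapping.keys f"
        by auto
      then show ?thesis by (rule finite_subset) simp
    qed
    have Ml: "\<forall>c\<in>Poly_Mapping.keys f. wdot \<omega> c = lev \<longrightarrow> real (Poly_Mapping.lookup c i) \<le> real (lam f \<tau> i)"
    proof (intro ballI impI)
      fix c assume c: "c \<in> Poly_Mapping.keys f" and w: "wdot \<omega> c = lev"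
      have "expvec c \<in> \<tau>" using toT c w by blast
      then have "Poly_Mapping.lookup c i \<le> lam f \<tau> i"
        unfolding lam_def using c finL by (intro Max_ge) auto
      then show "real (Poly_Mapping.lookup c i) \<le> real (lam f \<tau> i)" by simp
    qed
    note PB = keys_pow_bound[OF lo Ml, where k=l]
    have PB': "real l * lev \<le> wdot \<omega> c \<and> (wdot \<omega> c = real l * lev \<longrightarrow> real (Poly_Mapping.lookup c i) \<le> real l * real (lam f \<tau> i))"
      if "c \<in> Poly_Mapping.keys g" for c
      using PB[of c] that by (simp add: g_def lookup_add)
    have B0: "B \<noteq> 0" unfolding B_def by (metis lookup_single_eq lookup_zero one_neq_zero)
    have wB: "\<forall>p\<in>Poly_Mapping.keys B. weight \<omega> p = \<omega> $ i * real m"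
      by (simp add: B_def weight_eq wdot_single)
    have hk: "\<forall>c\<in>Poly_Mapping.keys (weyl_act B g). wdot \<omega> c > wdot \<omega> \<alpha> - \<omega> $ i * real m"
    proof
      fix k assume k: "k \<in> Poly_Mapping.keys (weyl_act B g)"
      have "weyl_act B g = (\<Sum>c\<in>Poly_Mapping.keys g. act1 (0, Poly_Mapping.single i m) 1 c (Poly_Mapping.lookup g c))"
        by (simp add: B_def weyl_act_single)
      then obtain c where c: "c \<in> Poly_Mapping.keys g" and kc: "k \<in> Poly_Mapping.keys (act1 (0, Poly_Mapping.single i m) 1 c (Poly_Mapping.lookup g c))"
        using k keys_sum by (metis (no_types, lifting) UN_E subsetD)
      have cond: "\<forall>j. Poly_Mapping.lookup (Poly_Mapping.single i m) j \<le> Poly_Mapping.lookup c j"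
        using kc by (auto simp: act1_def split: if_splits)
      have kk: "k = c - Poly_Mapping.single i m"
        using kc cond by (auto simp: act1_def split: if_splits)
      have mc: "m \<le> Poly_Mapping.lookup c i" using cond by (metis lookup_single_eq)
      have wk: "wdot \<omega> k = wdot \<omega> c - \<omega> $ i * real m"
        using kk wdot_diff[OF cond] by (simp add: wdot_single)
      have "wdot \<omega> c > real l * lev"
      proof -
        have "real l * lev \<le> wdot \<omega> c" using PB'[OF c] by blast
        moreover have "wdot \<omega> c \<noteq> real l * lev"
        proof
          assume "wdot \<omega> c = real l * lev"
          then have "real (Poly_Mapping.lookup c i) \<le> real l * real (lam f \<tau> i)" using PB'[OF c] by blast
          then have "Poly_Mapping.lookup c i \<le> l * lam f \<tau> i" by (simp add: of_nat_mult[symmetric] del: of_nat_mult)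
          then show False using mc by (simp add: m_def)
        qed
        ultimately show ?thesis by linarith
      qed
      then show "wdot \<omega> k > wdot \<omega> \<alpha> - \<omega> $ i * real m" using wk wa by linarith
    qed
    have "B \<in> initial_ideal \<omega> (Ann g)" by (rule G[OF a B0 wB hk])
    then show ?thesis by (simp add: B_def dpow_def m_def)
  qed
  have part2: "euler_op v (complex_of_real (real l * (v \<bullet> \<gamma>))) \<in> initial_ideal \<omega> (Ann g)"
    if v: "v \<in> V_of f \<tau>" and gam: "\<gamma> \<in> \<tau>" for v \<gamma>
  proof -
    define K0 where "K0 = complex_of_real (real l * (v \<bullet> \<gamma>))"
    define B where "B = euler_op v K0"
    show ?thesis
    proof (cases "B = 0")
      case True
      then show ?thesis unfolding initial_ideal_def by (simp add: B_def K0_def left_ideal_gen.zero)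
    next
      case False
      have vs: "v \<bullet> expvec c = v \<bullet> \<gamma>" if c: "c \<in> Poly_Mapping.keys f" and w: "wdot \<omega> c = lev" for c
      proof -
        have "expvec c \<in> Supp f" using c by (simp add: Supp_def)
        then have "expvec c \<in> \<tau> \<inter> Supp f" using toT[OF c w] by blast
        then show ?thesis by (rule V_face[OF f0 tau v gam])
      qed
      have vT: "\<forall>c\<in>Poly_Mapping.keys f. wdot \<omega> c = lev \<longrightarrow> v \<bullet> expvec c \<le> v \<bullet> \<gamma>"
        using vs by simp
      have vT2: "\<forall>c\<in>Poly_Mapping.keys f. wdot \<omega> c = lev \<longrightarrow> - (v \<bullet> expvec c) \<le> - (v \<bullet> \<gamma>)"
        using vs by simp
      note PB1 = keys_pow_bound[where \<phi>="\<lambda>c. v \<bullet> expvec c" and k=l, OF lo vT]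
      note PB2 = keys_pow_bound[where \<phi>="\<lambda>c. - (v \<bullet> expvec c)" and k=l, OF lo vT2]
      have eqv: "v \<bullet> expvec c = real l * (v \<bullet> \<gamma>)" if c: "c \<in> Poly_Mapping.keys g" and w: "wdot \<omega> c = real l * lev" for c
      proof -
        have "v \<bullet> expvec c \<le> real l * (v \<bullet> \<gamma>)" using PB1[of c] c w by (simp add: g_def expvec_add inner_add_right)
        moreover have "- (v \<bullet> expvec c) \<le> real l * (- (v \<bullet> \<gamma>))" using PB2[of c] c w by (simp add: g_def expvec_add inner_add_right)
        ultimately show ?thesis by linarith
      qed
      have geq: "real l * lev \<le> wdot \<omega> c" if "c \<in> Poly_Mapping.keys g" for c
        using PB1[of c] that by (simp add: g_def expvec_add inner_add_right)
      have wB: "\<forall>p\<in>Poly_Mapping.keys B. weight \<omega> p = 0"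
      proof
        fix p assume p: "p \<in> Poly_Mapping.keys B"
        define X where "X = (\<Sum>j\<in>UNIV. Poly_Mapping.single (Poly_Mapping.single j (1::nat), Poly_Mapping.single j (1::nat)) (complex_of_real (v $ j)))"
        have "p \<in> Poly_Mapping.keys X \<union> Poly_Mapping.keys (Poly_Mapping.single (0, 0) K0)"
          using p keys_diff[of X "Poly_Mapping.single (0, 0) K0"] unfolding B_def euler_op_def X_def by blast
        moreover have "Poly_Mapping.keys X \<subseteq> (\<Union>j. Poly_Mapping.keys (Poly_Mapping.single (Poly_Mapping.single j (1::nat), Poly_Mapping.single j (1::nat)) (complex_of_real (v $ j))))"
          unfolding X_def by (rule keys_sum)
        ultimately have "(\<exists>j. p = (Poly_Mapping.single j 1, Poly_Mapping.single j 1)) \<or> p = (0, 0)"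
          by (auto split: if_splits)
        then show "weight \<omega> p = 0" by (auto simp: weight_eq)
      qed
      have hk: "\<forall>c\<in>Poly_Mapping.keys (weyl_act B g). wdot \<omega> c > wdot \<omega> \<alpha> - 0"
      proof
        fix k assume k: "k \<in> Poly_Mapping.keys (weyl_act B g)"
        have "weyl_act B g = (\<Sum>c\<in>Poly_Mapping.keys g. Poly_Mapping.single c
            (Poly_Mapping.lookup g c * ((\<Sum>j\<in>UNIV. complex_of_real (v $ j) * of_nat (Poly_Mapping.lookup c j)) - K0)))"
          by (simp add: B_def weyl_act_euler)
        then obtain c where c: "c \<in> Poly_Mapping.keys g" and kc: "k \<in> Poly_Mapping.keys (Poly_Mapping.single c
            (Poly_Mapping.lookup g c * ((\<Sum>j\<in>UNIV. complex_of_real (v $ j) * of_nat (Poly_Mapping.lookup c j)) - K0)))"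
          using k keys_sum by (metis (no_types, lifting) UN_E subsetD)
        have kk: "k = c" using kc by (auto split: if_splits)
        have nz: "complex_of_real (v \<bullet> expvec c) \<noteq> K0"
          using kc by (auto simp: inner_expvec_complex split: if_splits)
        have "wdot \<omega> c \<noteq> real l * lev"
        proof
          assume "wdot \<omega> c = real l * lev"
          then have "v \<bullet> expvec c = real l * (v \<bullet> \<gamma>)" using eqv c by blast
          then show False using nz by (simp add: K0_def)
        qed
        then show "wdot \<omega> k > wdot \<omega> \<alpha> - 0" using geq[OF c] wa unfolding kk by linarith
      qed
      have "B \<in> initial_ideal \<omega> (Ann g)" by (rule G[OF a False wB hk])
      then show ?thesis by (simp add: B_def K0_def)
    qed
  qed
  show ?thesis using part1 part2 by (simp add: g_def)
qed


end
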